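(* Let $M_1=\{(t,0,0):t\in\mathbb{R}\}$ and $M_2=\{(0,t,1):t\in\mathbb{R}\}$. There exists $r_0>1$ such that every $\overline B_{r_0}$-ruled set $A\subset\mathbb H$ with $(M_1\cup M_2)\cap\overline B_{r_0}\subset A$ has nonempty interior.
   Context: $\mathbb H$ is $\mathbb{R}^3$ with product $uv=u+v+\frac12(x(u)y(v)-y(u)x(v))(0,0,1)$; a horizontal line is a set $w\{t h: t\in\mathbb{R}\}$ with $w\in\mathbb H$ and $h\in\langle(1,0,0),(0,1,0)\rangle\setminus\{0\}$. $d$ is the Carnot–Carathéodory metric, $B_r$ the closed $d$-ball of radius $r$ about $(0,0,0)$, and $\overline B_r$ its convex hull in $\mathbb{R}^3$. For a convex open (or convex) set $U\subset\mathbb H$, a set $A$ is $U$-ruled if for every horizontal line $L$ such that $L\cap U$ contains two distinct points of $A$, we have $L\cap U\subset A$. *)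

theory Defs
  imports "HOL-Analysis.Analysis"
begin

type_synonym heis = "real \<times> real \<times> real"

definition hx :: "heis \<Rightarrow> real" where "hx p = fst p"
definition hy :: "heis \<Rightarrow> real" where "hy p = fst (snd p)"
definition hz :: "heis \<Rightarrow> real" where "hz p = snd (snd p)"

definition hmul :: "heis \<Rightarrow> heis \<Rightarrow> heis" where
  "hmul u v = u + v + ((hx u * hy v - hy u * hx v) / 2) *\<^sub>R (0, 0, 1)"

definition horizontal_line :: "heis set \<Rightarrow> bool" where
  "horizontal_line L \<longleftrightarrow> (\<exists>w a b. (a, b) \<noteq> (0::real, 0::real) \<and>
      L = {hmul w (t * a, t * b, 0) | t. t \<in> (UNIV :: real set)})"

text \<open>Horizontal C^1 curves on [0,1]: velocity lies in the left-invariant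
  horizontal distribution spanned by X = d_x - y/2 d_z, Y = d_y + x/2 d_z.\<close>
definition horiz_curve :: "(real \<Rightarrow> heis) \<Rightarrow> bool" where
  "horiz_curve g \<longleftrightarrow> (\<exists>g'. continuous_on {0..1} g' \<and>
     (\<forall>t\<in>{0..1}. (g has_vector_derivative g' t) (at t within {0..1})) \<and>
     (\<forall>t\<in>{0..1}. hz (g' t) = (hx (g t) * hy (g' t) - hy (g t) * hx (g' t)) / 2))"

definition cc_length :: "(real \<Rightarrow> heis) \<Rightarrow> real" where
  "cc_length g = integral {0..1} (\<lambda>t.
      sqrt ((hx (vector_derivative g (at t within {0..1})))\<^sup>2
          + (hy (vector_derivative g (at t within {0..1})))\<^sup>2))"

definition cc_dist :: "heis \<Rightarrow> heis \<Rightarrow> real" where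
  "cc_dist p q = Inf {cc_length g | g. horiz_curve g \<and> g 0 = p \<and> g 1 = q}"

definition cc_ball :: "real \<Rightarrow> heis set" where
  "cc_ball r = {p. cc_dist (0, 0, 0) p \<le> r}"

definition cc_ball_hull :: "real \<Rightarrow> heis set" where
  "cc_ball_hull r = convex hull (cc_ball r)"

definition ruled :: "heis set \<Rightarrow> heis set \<Rightarrow> bool" where
  "ruled U A \<longleftrightarrow> (\<forall>L. horizontal_line L \<longrightarrow>
      (\<exists>p q. p \<in> L \<inter> U \<inter> A \<and> q \<in> L \<inter> U \<inter> A \<and> p \<noteq> q) \<longrightarrow> L \<inter> U \<subseteq> A)"

definition M1 :: "heis set" where "M1 = {(t, 0, 0) | t. t \<in> (UNIV :: real set)}"
definition M2 :: "heis set" where "M2 = {(0, t, 1) | t. t \<in> (UNIV :: real set)}"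

end

theory Submission
  imports Defs
begin

lemma cc_dist_le:
  fixes X Y Z r :: real
  assumes X: "X \<noteq> 0" and r: "\<bar>X\<bar> + \<bar>Y - 6*Z/X\<bar> + 2*\<bar>6*Z/X\<bar> \<le> r"
  shows "cc_dist (0,0,0) (X,Y,Z) \<le> r"
proof -
  define D where "D = 6*Z/X"
  define B where "B = Y - D"
  define g where "g = (\<lambda>t::real. (X*t, B*t + D*t^2, X*D*t^3/6))"
  define g' where "g' = (\<lambda>t::real. (X, B + 2*D*t, X*D*t^2/2))"
  have der: "(g has_vector_derivative g' t) (at t)" for t
    unfolding g_def g'_def
    by (auto intro!: derivative_eq_intros simp: power2_eq_square power3_eq_cube algebra_simps)
  have hc: "horiz_curve g"
    unfolding horiz_curve_def
  proof (intro exI[of _ g'] conjI ballI)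
    show "continuous_on {0..1} g'" unfolding g'_def by (intro continuous_intros) auto
    show "(g has_vector_derivative g' t) (at t within {0..1})" for t
      using der has_vector_derivative_at_within by blast
    show "hz (g' t) = (hx (g t) * hy (g' t) - hy (g t) * hx (g' t)) / 2" for t
      by (simp add: g_def g'_def hx_def hy_def hz_def power2_eq_square algebra_simps)
  qed
  have g0: "g 0 = (0,0,0)" by (simp add: g_def)
  have g1: "g 1 = (X,Y,Z)" using X by (simp add: g_def D_def B_def)
  have len: "cc_length g \<le> r"
  proof -
    have "cc_length g = integral {0..1} (\<lambda>t. sqrt (X^2 + (B + 2*D*t)^2))"
      unfolding cc_length_def
    proof (rule integral_cong)
      fix t :: real assume t: "t \<in> {0..1}"
      have "vector_derivative g (at t within {0..1}) = g' t"
        using vector_derivative_at_within_ivl[OF der] t by auto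
      then show "sqrt ((hx (vector_derivative g (at t within {0..1})))\<^sup>2
          + (hy (vector_derivative g (at t within {0..1})))\<^sup>2) = sqrt (X^2 + (B + 2*D*t)^2)"
        by (simp add: g'_def hx_def hy_def)
    qed
    also have "\<dots> \<le> integral {0..1} (\<lambda>t::real. r)"
    proof (rule integral_le)
      show "(\<lambda>t. sqrt (X^2 + (B + 2*D*t)^2)) integrable_on {0..1}"
        by (intro integrable_continuous_interval continuous_intros)
      show "(\<lambda>t::real. r) integrable_on {0..1}" by (rule integrable_const_ivl)
      fix t :: real assume t: "t \<in> {0..1}"
      have "sqrt (X^2 + (B + 2*D*t)^2) \<le> \<bar>X\<bar> + \<bar>B + 2*D*t\<bar>"
      proof -
        have "X^2 + (B + 2*D*t)^2 \<le> (\<bar>X\<bar> + \<bar>B + 2*D*t\<bar>)^2"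
          by (simp add: power2_sum)
        then have "sqrt (X^2 + (B + 2*D*t)^2) \<le> sqrt ((\<bar>X\<bar> + \<bar>B + 2*D*t\<bar>)^2)"
          by (rule real_sqrt_le_mono)
        then show ?thesis by simp
      qed
      also have "\<bar>B + 2*D*t\<bar> \<le> \<bar>B\<bar> + 2*\<bar>D\<bar>"
      proof -
        have "\<bar>D*t\<bar> \<le> \<bar>D\<bar>" using t by (simp add: abs_mult mult_left_le)
        then show ?thesis by linarith
      qed
      finally show "sqrt (X^2 + (B + 2*D*t)^2) \<le> r" using r by (simp add: B_def D_def)
    qed
    also have "\<dots> = r" by simp
    finally show ?thesis .
  qed
  have bdd: "bdd_below {cc_length g | g. horiz_curve g \<and> g 0 = (0,0,0) \<and> g 1 = (X,Y,Z)}"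
  proof (rule bdd_belowI[of _ 0], clarify)
    fix h :: "real \<Rightarrow> heis"
    show "0 \<le> cc_length h"
      unfolding cc_length_def
      by (cases "(\<lambda>t. sqrt ((hx (vector_derivative h (at t within {0..1})))\<^sup>2
          + (hy (vector_derivative h (at t within {0..1})))\<^sup>2)) integrable_on {0..1}")
        (auto intro: integral_nonneg simp: not_integrable_integral)
  qed
  have "cc_dist (0,0,0) (X,Y,Z) \<le> cc_length g"
    unfolding cc_dist_def using hc g0 g1 by (intro cInf_lower[OF _ bdd]) auto
  with len show ?thesis by simp
qed

lemma box_in_hull:
  fixes x y z :: real
  assumes "\<bar>x\<bar> < 5" "\<bar>y\<bar> < 5" "\<bar>z\<bar> < 5"
  shows "(x,y,z) \<in> cc_ball_hull 200"
proof -
  have inb: "(X,y,z) \<in> cc_ball 200" if "1 \<le> \<bar>X\<bar>" "\<bar>X\<bar> \<le> 11" for X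
  proof -
    have X: "X \<noteq> 0" using that by auto
    have "\<bar>6*z/X\<bar> \<le> 30"
    proof -
      have "\<bar>6*z/X\<bar> = 6*\<bar>z\<bar>/\<bar>X\<bar>" by (simp add: abs_divide abs_mult)
      also have "\<dots> \<le> 6*\<bar>z\<bar>" using that X
        by (simp add: divide_le_eq) (metis abs_ge_zero mult_left_mono mult_1_right mult_nonneg_nonneg zero_le_numeral mult.commute)
      finally show ?thesis using assms by linarith
    qed
    then have "\<bar>X\<bar> + \<bar>y - 6*z/X\<bar> + 2*\<bar>6*z/X\<bar> \<le> 200" using that assms by linarith
    from cc_dist_le[OF X this] show ?thesis by (simp add: cc_ball_def)
  qed
  have p1: "(x+6,y,z) \<in> convex hull (cc_ball 200)"
    by (rule hull_inc, rule inb) (use assms in auto)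
  have p2: "(x-6,y,z) \<in> convex hull (cc_ball 200)"
    by (rule hull_inc, rule inb) (use assms in auto)
  have "(1/2) *\<^sub>R (x+6,y,z) + (1/2) *\<^sub>R (x-6,y,z) \<in> convex hull (cc_ball 200)"
    by (rule convexD[OF convex_convex_hull p1 p2]) auto
  moreover have "(x+6)/2 + (x-6)/2 = x" by (simp add: field_simps)
  ultimately show ?thesis by (simp add: cc_ball_hull_def)
qed

lemma hmul_line1: "s \<noteq> 0 \<Longrightarrow> hmul (s,0,0) (t*(-s), t*(2/s), 0) = (s*(1-t), 2*t/s, t)"
  by (simp add: hmul_def hx_def hy_def algebra_simps)

lemma hmul_line2: "hmul (X,Y,Z) (t*1, t*0, 0) = (X+t, Y, Z - Y*t/2)"
  by (simp add: hmul_def hx_def hy_def algebra_simps)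

lemma surfA:
  fixes s \<tau> :: real
  assumes ru: "ruled U A" and MA: "(M1 \<union> M2) \<inter> U \<subseteq> A"
    and box: "\<And>x y z. \<bar>x\<bar> < 5 \<Longrightarrow> \<bar>y\<bar> < 5 \<Longrightarrow> \<bar>z\<bar> < 5 \<Longrightarrow> (x,y,z) \<in> U"
    and s: "s \<noteq> 0" "\<bar>s\<bar> < 5" "\<bar>2/s\<bar> < 5" "\<bar>s*(1-\<tau>)\<bar> < 5" "\<bar>2*\<tau>/s\<bar> < 5" "\<bar>\<tau>\<bar> < 5"
  shows "(s*(1-\<tau>), 2*\<tau>/s, \<tau>) \<in> A"
proof -
  define L where "L = {hmul (s,0,0) (t*(-s), t*(2/s), 0) | t. t \<in> (UNIV::real set)}"
  have hl: "horizontal_line L" unfolding horizontal_line_def L_def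
    using s by (intro exI[of _ "(s,0,0)"] exI[of _ "-s"] exI[of _ "2/s"]) auto
  have L: "L = {(s*(1-t), 2*t/s, t) | t. t \<in> (UNIV::real set)}"
    unfolding L_def using hmul_line1[OF s(1)] by simp
  have pL: "(s,0,0) \<in> L" unfolding L by (auto intro!: exI[of _ 0])
  have qL: "(0,2/s,1) \<in> L" unfolding L by (auto intro!: exI[of _ 1])
  have pU: "(s,0,0) \<in> U" using box s by auto
  have qU: "(0,2/s,1) \<in> U" using box s by auto
  have pA: "(s,0,0) \<in> A" using MA pU by (auto simp: M1_def)
  have qA: "(0,2/s,1) \<in> A" using MA qU by (auto simp: M2_def)
  have ne: "(s,0,0) \<noteq> (0,2/s,1::real)" using s by auto
  have sub: "L \<inter> U \<subseteq> A"
    using ru hl pL qL pU qU pA qA ne unfolding ruled_def by blast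
  have "(s*(1-\<tau>), 2*\<tau>/s, \<tau>) \<in> L" unfolding L by auto
  moreover have "(s*(1-\<tau>), 2*\<tau>/s, \<tau>) \<in> U" using box s by auto
  ultimately show ?thesis using sub by auto
qed

lemma lineA:
  fixes X Y Z l1 l2 :: real
  assumes ru: "ruled U A"
    and Y: "Y \<noteq> 0" and l: "l1 \<noteq> l2"
    and A1: "(X+l1, Y, Z - Y*l1/2) \<in> A" and A2: "(X+l2, Y, Z - Y*l2/2) \<in> A"
    and U1: "(X+l1, Y, Z - Y*l1/2) \<in> U" and U2: "(X+l2, Y, Z - Y*l2/2) \<in> U"
    and UP: "(X,Y,Z) \<in> U"
  shows "(X,Y,Z) \<in> A"
proof -
  define L where "L = {hmul (X,Y,Z) (t*1, t*0, 0) | t. t \<in> (UNIV::real set)}"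
  have hl: "horizontal_line L" unfolding horizontal_line_def L_def
    by (intro exI[of _ "(X,Y,Z)"] exI[of _ "1"] exI[of _ "0"]) auto
  have L: "L = {(X+t, Y, Z - Y*t/2) | t. t \<in> (UNIV::real set)}"
    unfolding L_def hmul_line2 by simp
  have "(X+l1, Y, Z - Y*l1/2) \<in> L" "(X+l2, Y, Z - Y*l2/2) \<in> L" "(X,Y,Z) \<in> L"
    unfolding L by (auto intro: exI[of _ 0])
  moreover have "(X+l1, Y, Z - Y*l1/2) \<noteq> (X+l2, Y, Z - Y*l2/2)" using l by auto
  ultimately show ?thesis using ru hl A1 A2 U1 U2 UP unfolding ruled_def by blast
qed

definition lam :: "real \<Rightarrow> heis \<Rightarrow> real" where
  "lam \<sigma> P = (-2*(1 - hz P) + \<sigma> * sqrt (2*(2 - 2*hz P - hx P * hy P))) / hy P"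
definition tau :: "real \<Rightarrow> heis \<Rightarrow> real" where
  "tau \<sigma> P = hz P - hy P * lam \<sigma> P / 2"
definition xq :: "real \<Rightarrow> heis \<Rightarrow> real" where
  "xq \<sigma> P = hx P + lam \<sigma> P"
definition marg :: "real \<Rightarrow> heis \<Rightarrow> real" where
  "marg \<sigma> P = min (5 - \<bar>xq \<sigma> P\<bar>) (min (5 - \<bar>tau \<sigma> P\<bar>)
      (min (5*\<bar>1 - tau \<sigma> P\<bar> - \<bar>xq \<sigma> P\<bar>) (5*\<bar>xq \<sigma> P\<bar> - 2*\<bar>1 - tau \<sigma> P\<bar>)))"
definition mm :: "heis \<Rightarrow> real" where
  "mm P = min (2 - 2*hz P - hx P * hy P) (min (5 - \<bar>hx P\<bar>) (min (5 - \<bar>hy P\<bar>)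
      (min (5 - \<bar>hz P\<bar> ) (min (marg 1 P) (marg (-1) P)))))"

lemma root_on_surface:
  fixes X Y Z l SD \<sigma> :: real
  assumes Y: "Y \<noteq> 0" and l: "l = (-2*(1 - Z) + \<sigma> * SD) / Y"
    and SD: "SD^2 = 2*(2 - 2*Z - X*Y)" and \<sigma>: "\<sigma>^2 = 1"
  shows "2*(Z - Y*l/2)*(1 - (Z - Y*l/2)) = Y*(X+l)"
proof -
  define u where "u = Y*l"
  have u: "u = -2*(1 - Z) + \<sigma> * SD" using Y l by (simp add: u_def)
  have "Y*(X+l) = X*Y + u" by (simp add: u_def algebra_simps)
  moreover have "2*(Z - Y*l/2)*(1 - (Z - Y*l/2)) = 2*(Z - u/2)*(1 - (Z - u/2))" by (simp add: u_def)
  moreover have "2*(Z - u/2)*(1 - (Z - u/2)) = X*Y + u"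
  proof -
    have w: "(\<sigma> * SD)^2 = 2*(2 - 2*Z - X*Y)" using SD \<sigma> by (simp add: power_mult_distrib)
    have "2*(Z - u/2)*(1 - (Z - u/2)) - (X*Y + u) = ((\<sigma> * SD)^2 - 2*(2 - 2*Z - X*Y)) * (-1/2)"
      unfolding u by (simp add: power2_eq_square field_simps)
    then show ?thesis using w by simp
  qed
  ultimately show ?thesis by simp
qed

lemma lam_cont: "continuous_on {P. 1/2 < hy P} (lam \<sigma>)"
proof -
  have "continuous_on {P. 1/2 < hy P} (\<lambda>P. (-2*(1 - hz P) + \<sigma> * sqrt (2*(2 - 2*hz P - hx P * hy P))) / hy P)"
    unfolding hx_def hy_def hz_def by (intro continuous_intros) auto
  then show ?thesis by (simp add: lam_def[abs_def])
qed

lemma tau_cont: "continuous_on {P. 1/2 < hy P} (tau \<sigma>)"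
proof -
  have "continuous_on {P. 1/2 < hy P} (\<lambda>P. hz P - hy P * lam \<sigma> P / 2)"
    unfolding hy_def hz_def by (intro continuous_intros lam_cont[unfolded hy_def]) auto
  then show ?thesis by (simp add: tau_def[abs_def])
qed

lemma xq_cont: "continuous_on {P. 1/2 < hy P} (xq \<sigma>)"
proof -
  have "continuous_on {P. 1/2 < hy P} (\<lambda>P. hx P + lam \<sigma> P)"
    unfolding hx_def by (intro continuous_intros lam_cont)
  then show ?thesis by (simp add: xq_def[abs_def])
qed

lemma marg_cont: "continuous_on {P. 1/2 < hy P} (marg \<sigma>)"
proof -
  have "continuous_on {P. 1/2 < hy P} (\<lambda>P. min (5 - \<bar>xq \<sigma> P\<bar>) (min (5 - \<bar>tau \<sigma> P\<bar>)
      (min (5*\<bar>1 - tau \<sigma> P\<bar> - \<bar>xq \<sigma> P\<bar>) (5*\<bar>xq \<sigma> P\<bar> - 2*\<bar>1 - tau \<sigma> P\<bar>))))"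
    by (intro continuous_intros xq_cont tau_cont)
  then show ?thesis by (simp add: marg_def[abs_def])
qed

lemma mm_cont: "continuous_on {P. 1/2 < hy P} mm"
proof -
  have "continuous_on {P. 1/2 < hy P} (\<lambda>P. min (2 - 2*hz P - hx P * hy P) (min (5 - \<bar>hx P\<bar>) (min (5 - \<bar>hy P\<bar>)
      (min (5 - \<bar>hz P\<bar> ) (min (marg 1 P) (marg (-1) P))))))"
    unfolding hx_def hy_def hz_def by (intro continuous_intros marg_cont[unfolded hy_def])
  then show ?thesis by (simp add: mm_def[abs_def])
qed

lemma O_open: "open {P. 1/2 < hy P \<and> 0 < mm P}"
proof -
  have Veq: "{P::heis. 1/2 < hy P} = UNIV \<times> ({1/2<..} \<times> UNIV)" by (auto simp: hy_def)
  have V: "open {P::heis. 1/2 < hy P}" unfolding Veq by (intro open_Times open_UNIV open_greaterThan)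
  have "open (mm -` {0<..} \<inter> {P. 1/2 < hy P})"
    using continuous_on_open_vimage[OF V, THEN iffD1, OF mm_cont, rule_format, OF open_greaterThan] .
  moreover have "mm -` {0<..} \<inter> {P. 1/2 < hy P} = {P. 1/2 < hy P \<and> 0 < mm P}"
    by (simp add: set_eq_iff conj_commute)
  ultimately show ?thesis by simp
qed

lemma P0_in: "1/2 < hy (0,1,3/4) \<and> 0 < mm (0,1,3/4)"
proof -
  have s: "sqrt (2 * (2 - 2 * (3/4) - 0 * 1)) = (1::real)" by simp
  have l1: "lam 1 (0,1,3/4) = 1/2" unfolding lam_def hx_def hy_def hz_def
    by (simp only: fst_conv snd_conv s) simp
  have l2: "lam (-1) (0,1,3/4) = -3/2" unfolding lam_def hx_def hy_def hz_def
    by (simp only: fst_conv snd_conv s) simp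
  have m1: "marg 1 (0,1,3/4) > 0"
    unfolding marg_def xq_def tau_def l1 by (simp add: hx_def hy_def hz_def)
  have m2: "marg (-1) (0,1,3/4) > 0"
    unfolding marg_def xq_def tau_def l2 by (simp add: hx_def hy_def hz_def)
  show ?thesis using m1 m2 by (simp add: mm_def hx_def hy_def hz_def)
qed

lemma O_sub:
  assumes ru: "ruled U A" and MA: "(M1 \<union> M2) \<inter> U \<subseteq> A"
    and box: "\<And>x y z. \<bar>x\<bar> < 5 \<Longrightarrow> \<bar>y\<bar> < 5 \<Longrightarrow> \<bar>z\<bar> < 5 \<Longrightarrow> (x,y,z) \<in> U"
    and P: "1/2 < hy P" "0 < mm P"
  shows "P \<in> A"
proof -
  obtain X Y Z where PXYZ: "P = (X,Y,Z)" by (cases P) auto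
  have hP: "hx P = X" "hy P = Y" "hz P = Z" by (simp_all add: PXYZ hx_def hy_def hz_def)
  have Y: "Y \<noteq> 0" "1/2 < Y" using P hP by auto
  define SD where "SD = sqrt (2*(2 - 2*Z - X*Y))"
  have D: "0 < 2 - 2*Z - X*Y" using P(2) hP by (simp add: mm_def)
  have SDpos: "0 < SD" using D by (simp add: SD_def)
  have SD2: "SD^2 = 2*(2 - 2*Z - X*Y)" using D by (simp add: SD_def)
  have box3: "\<bar>X\<bar> < 5" "\<bar>Y\<bar> < 5" "\<bar>Z\<bar> < 5" using P(2) hP by (auto simp: mm_def)
  have Qi: "(X + lam \<sigma> P, Y, Z - Y*lam \<sigma> P/2) \<in> A \<and> (X + lam \<sigma> P, Y, Z - Y*lam \<sigma> P/2) \<in> U"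
    if \<sigma>: "\<sigma>^2 = 1" "0 < marg \<sigma> P" for \<sigma>
  proof -
    define l where "l = lam \<sigma> P"
    define \<tau> where "\<tau> = Z - Y*l/2"
    define xx where "xx = X + l"
    have tt: "tau \<sigma> P = \<tau>" "xq \<sigma> P = xx" by (simp_all add: tau_def xq_def \<tau>_def xx_def l_def hP)
    have m: "\<bar>xx\<bar> < 5" "\<bar>\<tau>\<bar> < 5" "\<bar>xx\<bar> < 5*\<bar>1-\<tau>\<bar>" "2*\<bar>1-\<tau>\<bar> < 5*\<bar>xx\<bar>"
      using \<sigma>(2) unfolding marg_def tt by auto
    have t1: "1 - \<tau> \<noteq> 0" using m by auto
    have x0: "xx \<noteq> 0" using m by auto
    define s where "s = xx / (1 - \<tau>)"
    have s0: "s \<noteq> 0" using t1 x0 by (simp add: s_def)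
    have ls: "l = (-2*(1 - Z) + \<sigma> * SD) / Y" by (simp add: l_def lam_def hP SD_def)
    have surf: "2*\<tau>*(1 - \<tau>) = Y*xx"
      unfolding \<tau>_def xx_def by (rule root_on_surface[OF Y(1) ls SD2 \<sigma>(1)])
    have e1: "s*(1-\<tau>) = xx" using t1 by (simp add: s_def)
    have e2: "2*\<tau>/s = Y" using t1 x0 Y surf by (simp add: s_def field_simps)
    have abs_s: "\<bar>s\<bar> < 5" using t1 m by (simp add: s_def abs_divide divide_less_eq)
    have a2: "\<bar>2 - 2*\<tau>\<bar> = 2*\<bar>1-\<tau>\<bar>" using abs_mult[of 2 "1-\<tau>"] by (simp add: algebra_simps)
    have abs_2s: "\<bar>2/s\<bar> < 5" using t1 x0 m a2 by (simp add: s_def abs_divide divide_less_eq abs_mult)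
    have "(s*(1-\<tau>), 2*\<tau>/s, \<tau>) \<in> A"
      by (rule surfA[OF ru MA box s0 abs_s abs_2s]) (use e1 e2 m box3 in auto)
    then have "(xx, Y, \<tau>) \<in> A" using e1 e2 by simp
    moreover have "(xx, Y, \<tau>) \<in> U" using box m box3 by auto
    ultimately show ?thesis by (simp add: xx_def \<tau>_def l_def)
  qed
  have m1: "0 < marg 1 P" and m2: "0 < marg (-1) P" using P(2) by (auto simp: mm_def)
  have neq: "lam 1 P \<noteq> lam (-1) P"
  proof -
    have lf: "lam \<sigma> P = (-2*(1-Z) + \<sigma>*SD)/Y" for \<sigma> by (simp only: lam_def hP SD_def)
    have "lam 1 P - lam (-1) P = (2*SD)/Y"
      unfolding lf by (simp add: diff_divide_distrib[symmetric])
    moreover have "(2*SD)/Y \<noteq> 0" using SDpos Y by simp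
    ultimately show ?thesis by auto
  qed
  show ?thesis unfolding PXYZ
    by (rule lineA[OF ru Y(1) neq]) (use Qi[of 1] Qi[of "-1"] m1 m2 box box3 in auto)
qed

theorem mainTheorem18:
  shows "\<exists>r0 > 1. \<forall>A :: heis set.
           ruled (cc_ball_hull r0) A \<and> (M1 \<union> M2) \<inter> cc_ball_hull r0 \<subseteq> A
           \<longrightarrow> interior A \<noteq> {}"
proof (intro exI[of _ 200] conjI allI impI)
  fix A :: "heis set"
  assume a: "ruled (cc_ball_hull 200) A \<and> (M1 \<union> M2) \<inter> cc_ball_hull 200 \<subseteq> A"
  have sub: "{P. 1/2 < hy P \<and> 0 < mm P} \<subseteq> A"
    using O_sub[OF a[THEN conjunct1] a[THEN conjunct2] box_in_hull] by blast
  have "(0,1,3/4) \<in> interior A"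
    using interior_maximal[OF sub O_open] P0_in by blast
  then show "interior A \<noteq> {}" by blast
qed simp

end
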